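(* Let $G$ be a finite-dimensional $\mathbb{F}_p$-vector space, $V\le G$ a subspace, and $\beta:G\times G\to\mathbb{F}_p^r$ a bilinear map such that $\beta|_{V\times V}$ has rank at least $s$. Fix a coset $a+V$ and let $B=\{(x,y)\in(a+V)\times V:\beta(x,y)=0\}$. Let $S\le V$ be a subspace of codimension $d$ and let $k$ be a positive integer. Then \[(S\cap B_{x_1\cdot}\cap\dots\cap B_{x_k\cdot})+(S\cap B_{y_1\cdot}\cap\dots\cap B_{y_k\cdot})=S\] holds for all but at most $81p^{2d+4kr-s/4}|V|^{2k}$ choices of $(x_1,\dots,x_k,y_1,\dots,y_k)\in(a+V)^{2k}$.
   Context: For $x\in a+V$, $B_{x\cdot}=\{y\in V:(x,y)\in B\}$. A bilinear map $\gamma:V\times V\to\mathbb{F}_p^r$ has rank at least $s$ if for every nonzero $\lambda\in\mathbb{F}_p^r$ the bilinear form $\lambda\cdot\gamma$ has rank at least $s$ on $V\times V$. *)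

theory Defs
  imports "HOL-Analysis.Analysis"
begin

text \<open>Vector spaces over the finite field 'a are modelled as 'a^'n (finite index type 'n),
  with scalar multiplication (*s); subspaces and dimensions are those of the library
  interpretation vec of vector_space.\<close>

definition bilinear_map :: "('a::field ^ 'n \<Rightarrow> 'a ^ 'n \<Rightarrow> 'a ^ 'm) \<Rightarrow> bool" where
  "bilinear_map \<beta> \<longleftrightarrow>
     (\<forall>x. Vector_Spaces.linear (*s) (*s) (\<beta> x)) \<and>
     (\<forall>y. Vector_Spaces.linear (*s) (*s) (\<lambda>x. \<beta> x y))"

text \<open>The form lambda . beta.\<close>
definition lin_comb_form :: "'a::field ^ 'm \<Rightarrow> ('a ^ 'n \<Rightarrow> 'a ^ 'n \<Rightarrow> 'a ^ 'm) \<Rightarrow> 'a ^ 'n \<Rightarrow> 'a ^ 'n \<Rightarrow> 'a" where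
  "lin_comb_form l \<beta> x y = (\<Sum>i\<in>UNIV. l $ i * \<beta> x y $ i)"

text \<open>Rank of a bilinear form f on V x V: dim V minus dim of its (left) radical in V.\<close>
definition bf_rank_on :: "('a::field ^ 'n) set \<Rightarrow> ('a ^ 'n \<Rightarrow> 'a ^ 'n \<Rightarrow> 'a) \<Rightarrow> nat" where
  "bf_rank_on V f = vec.dim V - vec.dim {x\<in>V. \<forall>y\<in>V. f x y = 0}"

text \<open>beta has rank at least s on V x V: every nonzero lambda . beta has rank at least s.\<close>
definition bm_rank_ge :: "('a::field ^ 'n) set \<Rightarrow> ('a ^ 'n \<Rightarrow> 'a ^ 'n \<Rightarrow> 'a ^ 'm) \<Rightarrow> real \<Rightarrow> bool" where
  "bm_rank_ge V \<beta> s \<longleftrightarrow> (\<forall>l. l \<noteq> 0 \<longrightarrow> real (bf_rank_on V (lin_comb_form l \<beta>)) \<ge> s)"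

definition coset :: "'g::plus \<Rightarrow> 'g set \<Rightarrow> 'g set" where
  "coset a V = (\<lambda>v. a + v) ` V"

definition sect :: "('g \<times> 'g) set \<Rightarrow> 'g \<Rightarrow> 'g set" where
  "sect B x = {y. (x, y) \<in> B}"

definition setsum :: "'g::plus set \<Rightarrow> 'g set \<Rightarrow> 'g set" where
  "setsum A C = {u + v | u v. u \<in> A \<and> v \<in> C}"

end

theory Submission
  imports Defs
begin


definition lf :: "('a::field ^ 'n \<Rightarrow> 'a) \<Rightarrow> bool" where
  "lf f \<longleftrightarrow> (\<forall>u v. f (u + v) = f u + f v) \<and> (\<forall>c u. f (c *s u) = c * f u)"

lemma lf_add: "lf f \<Longrightarrow> f (u + v) = f u + f v" by (simp add: lf_def)
lemma lf_scale: "lf f \<Longrightarrow> f (c *s u) = c * f u" by (simp add: lf_def)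
lemma lf_zero: "lf f \<Longrightarrow> f 0 = 0"
  using lf_scale[of f 0 0] by simp
lemma lf_neg: "lf f \<Longrightarrow> f (- u) = - f u"
  using lf_scale[of f "-1" u] by simp
lemma lf_diff: "lf f \<Longrightarrow> f (u - v) = f u - f v"
  using lf_add[of f u "-v"] lf_neg[of f v] by simp

lemma lf_sum: "(\<And>i. i \<in> I \<Longrightarrow> lf (f i)) \<Longrightarrow> lf (\<lambda>y. \<Sum>i\<in>I. c i * f i y)"
  unfolding lf_def
  by (auto simp: lf_add lf_scale sum.distrib distrib_left sum_distrib_left mult.left_commute)

lemma lf_minus: "lf f \<Longrightarrow> lf g \<Longrightarrow> lf (\<lambda>y. f y - g y)"
  unfolding lf_def by (auto simp: algebra_simps)

lemma lf_kernel_subspace: "lf f \<Longrightarrow> vec.subspace {y. f y = 0}"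
  unfolding vec.subspace_def by (auto simp: lf_add lf_scale lf_zero)

lemma subspace_inter_kernel: "vec.subspace T \<Longrightarrow> lf f \<Longrightarrow> vec.subspace {y\<in>T. f y = 0}"
  using vec.subspace_inter[OF _ lf_kernel_subspace[of f], of T] by (simp add: Int_def)

lemma dual_single:
  assumes S: "vec.subspace S" and f: "lf f" and g: "lf g"
    and van: "\<forall>y\<in>S. f y = 0 \<longrightarrow> g y = 0"
  shows "\<exists>t. \<forall>y\<in>S. g y = t * f y"
proof (cases "\<forall>y\<in>S. f y = 0")
  case True then show ?thesis using van by (intro exI[of _ 0]) auto
next
  case False
  then obtain y0 where y0: "y0 \<in> S" "f y0 \<noteq> 0" by auto
  show ?thesis
  proof (intro exI[of _ "g y0 / f y0"] ballI)
    fix y assume y: "y \<in> S"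
    let ?w = "y - (f y / f y0) *s y0"
    have "?w \<in> S" using S y y0 by (simp add: vec.subspace_diff vec.subspace_scale)
    moreover have "f ?w = 0" using y0 by (simp add: lf_diff[OF f] lf_scale[OF f])
    ultimately have "g ?w = 0" using van by blast
    then have "g y = (f y / f y0) * g y0" by (simp add: lf_diff[OF g] lf_scale[OF g])
    then show "g y = g y0 / f y0 * f y" by simp
  qed
qed

lemma dual_span:
  assumes "finite I"
  shows "vec.subspace S \<Longrightarrow> (\<forall>i\<in>I. lf (f i)) \<Longrightarrow> lf g \<Longrightarrow>
    (\<forall>y\<in>S. (\<forall>i\<in>I. f i y = 0) \<longrightarrow> g y = 0) \<Longrightarrow> \<exists>c. \<forall>y\<in>S. g y = (\<Sum>i\<in>I. c i * f i y)"
  using assms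
proof (induction I arbitrary: S rule: finite_induct)
  case empty
  then show ?case by auto
next
  case (insert j I)
  let ?S' = "{y\<in>S. f j y = 0}"
  have S': "vec.subspace ?S'" using insert by (simp add: subspace_inter_kernel)
  have "\<exists>c. \<forall>y\<in>?S'. g y = (\<Sum>i\<in>I. c i * f i y)"
    using insert.IH[OF S'] insert.prems by auto
  then obtain c where c: "\<forall>y\<in>?S'. g y = (\<Sum>i\<in>I. c i * f i y)" by blast
  let ?g' = "\<lambda>y. g y - (\<Sum>i\<in>I. c i * f i y)"
  have lg': "lf ?g'" using insert.prems by (intro lf_minus lf_sum) auto
  have "\<exists>t. \<forall>y\<in>S. ?g' y = t * f j y"
    using dual_single[OF insert.prems(1) _ lg'] insert.prems c by auto
  then obtain t where t: "\<forall>y\<in>S. ?g' y = t * f j y" by blast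
  show ?case
  proof (intro exI[of _ "c(j := t)"] ballI)
    fix y assume "y \<in> S"
    then have "g y = (\<Sum>i\<in>I. c i * f i y) + t * f j y" using t by (metis diff_add_cancel add.commute)
    moreover have "(\<Sum>i\<in>I. (c(j := t)) i * f i y) = (\<Sum>i\<in>I. c i * f i y)"
      using insert.hyps by (intro sum.cong) auto
    ultimately show "g y = (\<Sum>i\<in>insert j I. (c(j := t)) i * f i y)"
      using insert.hyps by (simp add: add.commute)
  qed
qed



lemma dim_drop_one:
  assumes T: "vec.subspace T" and f: "lf f"
  shows "vec.dim T \<le> vec.dim {y\<in>T. f y = 0} + 1"
proof (cases "\<forall>y\<in>T. f y = 0")
  case True
  then have "{y\<in>T. f y = 0} = T" by auto
  then show ?thesis by simp
next
  case False
  then obtain t0 where t0: "t0 \<in> T" "f t0 \<noteq> 0" by auto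
  let ?T0 = "{y\<in>T. f y = 0}"
  have "T \<subseteq> vec.span (insert t0 ?T0)"
  proof
    fix y assume y: "y \<in> T"
    let ?w = "y - (f y / f t0) *s t0"
    have "?w \<in> ?T0" using T y t0 by (simp add: vec.subspace_diff vec.subspace_scale lf_diff[OF f] lf_scale[OF f])
    then have "?w \<in> vec.span (insert t0 ?T0)" by (simp add: vec.span_base)
    moreover have "(f y / f t0) *s t0 \<in> vec.span (insert t0 ?T0)"
      by (simp add: vec.span_base vec.span_scale)
    ultimately have "?w + (f y / f t0) *s t0 \<in> vec.span (insert t0 ?T0)" by (rule vec.span_add)
    then show "y \<in> vec.span (insert t0 ?T0)" by simp
  qed
  then have "vec.dim T \<le> vec.dim (insert t0 ?T0)" by (rule vec.dim_mono)
  also have "\<dots> \<le> vec.dim ?T0 + 1" by (simp add: vec.dim_insert)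
  finally show ?thesis .
qed

lemma dim_drop:
  assumes "finite E"
  shows "vec.subspace T \<Longrightarrow> (\<forall>e\<in>E. lf (f e)) \<Longrightarrow> vec.dim T \<le> vec.dim {y\<in>T. \<forall>e\<in>E. f e y = 0} + card E"
  using assms
proof (induction E rule: finite_induct)
  case empty then show ?case by simp
next
  case (insert x E)
  let ?T' = "{y\<in>T. \<forall>e\<in>E. f e y = 0}"
  have lfs: "\<forall>e\<in>E. lf (f e)" and lfx: "lf (f x)" using insert.prems(2) by auto
  have sub: "vec.subspace ?T'"
  proof -
    have eq: "?T' = T \<inter> (\<Inter>e\<in>E. {y. f e y = 0})" by auto
    have "vec.subspace (\<Inter>e\<in>E. {y. f e y = 0})"
      using lfs by (intro vec.subspace_Inter) (auto intro: lf_kernel_subspace)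
    then show ?thesis unfolding eq using insert.prems(1) by (rule vec.subspace_inter[rotated])
  qed
  have h1: "vec.dim T \<le> vec.dim ?T' + card E" using insert.IH[OF insert.prems(1) lfs] .
  have h2: "vec.dim ?T' \<le> vec.dim {y\<in>?T'. f x y = 0} + 1"
    using dim_drop_one[OF sub lfx] .
  have h3: "{y\<in>?T'. f x y = 0} = {y\<in>T. \<forall>e\<in>insert x E. f e y = 0}" by auto
  have h4: "card (insert x E) = card E + 1" using insert.hyps by simp
  show ?case using h1 h2 unfolding h3 h4 by linarith
qed

lemma card_subspace:
  fixes T :: "('a::{field,finite} ^ 'n) set"
  assumes T: "vec.subspace T"
  shows "card T = CARD('a) ^ vec.dim T"
proof -
  obtain B where B: "B \<subseteq> T" "vec.independent B" "T \<subseteq> vec.span B" "card B = vec.dim T"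
    using vec.basis_exists by blast
  have fB: "finite B" using B(2) vec.finiteI_independent by blast
  have spanB: "vec.span B = T" using vec.span_minimal[OF B(1) T] B(3) by (rule subset_antisym)
  let ?h = "\<lambda>u. \<Sum>v\<in>B. u v *s v"
  have "bij_betw ?h (PiE B (\<lambda>_. UNIV)) T"
  proof (rule bij_betwI')
    fix u w :: "'a^'n \<Rightarrow> 'a" assume u: "u \<in> PiE B (\<lambda>_. UNIV)" and w: "w \<in> PiE B (\<lambda>_. UNIV)"
    show "(?h u = ?h w) = (u = w)"
    proof
      assume "?h u = ?h w"
      then have "(\<Sum>v\<in>B. (\<lambda>v. u v - w v) v *s v) = 0"
        by (simp add: vec.scale_left_diff_distrib sum_subtractf)
      moreover have "\<forall>c. (\<Sum>v\<in>B. c v *s v) = 0 \<longrightarrow> (\<forall>v\<in>B. c v = 0)"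
        using B(2) unfolding vec.independent_explicit by (rule conjunct2)
      ultimately have "\<forall>v\<in>B. u v - w v = 0"
        by (rule spec[where x="\<lambda>v. u v - w v", THEN mp, rotated])
      then show "u = w" using u w by (intro PiE_ext) auto
    qed simp
  next
    fix u :: "'a^'n \<Rightarrow> 'a" assume "u \<in> PiE B (\<lambda>_. UNIV)"
    show "?h u \<in> T" using B T by (intro vec.subspace_sum vec.subspace_scale) auto
  next
    fix y assume "y \<in> T"
    then have "y \<in> vec.span B" using spanB by simp
    then have "y \<in> range ?h" unfolding vec.span_finite[OF fB] .
    then obtain u where "y = ?h u" by auto
    moreover have "?h u = ?h (restrict u B)" by (intro sum.cong) auto
    ultimately have e: "y = ?h (restrict u B)" by (rule trans)
    have m: "restrict u B \<in> PiE B (\<lambda>_. UNIV)" by (simp add: restrict_PiE_iff)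
    show "\<exists>u\<in>PiE B (\<lambda>_. UNIV). y = ?h u" using e m by (rule bexI)
  qed
  then have "card T = card (PiE B (\<lambda>_. UNIV :: 'a set))" by (simp add: bij_betw_same_card)
  also have "\<dots> = CARD('a) ^ card B" using fB by (simp add: card_PiE)
  finally show ?thesis using B by simp
qed

lemma phi_exists:
  fixes M :: "('a::field ^ 'n) set"
  assumes M: "vec.subspace M" and z: "z \<notin> M"
  shows "\<exists>\<phi>. lf \<phi> \<and> \<phi> z \<noteq> 0 \<and> (\<forall>y\<in>M. \<phi> y = 0)"
proof -
  obtain BM where BM: "BM \<subseteq> M" "vec.independent BM" "M \<subseteq> vec.span BM" "card BM = vec.dim M"
    using vec.basis_exists by blast
  have spanB: "vec.span BM = M" using BM M by (meson subset_antisym vec.span_minimal)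
  have ind: "vec.independent (insert z BM)" using BM(2) z spanB by (simp add: vec.independent_insertI)
  obtain g :: "'a^'n \<Rightarrow> 'a^'n" where g: "Vector_Spaces.linear (*s) (*s) g"
     "\<forall>x\<in>insert z BM. g x = (if x = z then (\<chi> i. 1) else 0)"
    using vec.linear_independent_extend[OF ind, where f="\<lambda>x. if x = z then (\<chi> i. 1) else (0::'a^'n)"] by blast
  fix i0 :: 'n
  let ?\<phi> = "\<lambda>y. g y $ i0"
  have "lf ?\<phi>" unfolding lf_def using g(1) by (simp add: vec.linear_add vec.linear_scale)
  moreover have "?\<phi> z \<noteq> 0" using g(2) by simp
  moreover have "\<forall>x\<in>BM. g x = 0" using g(2) z BM(1) by auto
  moreover have "\<forall>y\<in>M. g y = 0"
    using calculation(3) vec.linear_eq_0_on_span[OF g(1), of BM] spanB by blast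
  ultimately show ?thesis by auto
qed



lemma lists_prod:
  assumes "\<And>i. finite (A i)"
  shows "card {xs. length xs = k \<and> (\<forall>i<k. xs ! i \<in> A i)} = (\<Prod>i<k. card (A i))"
  using assms
proof (induction k arbitrary: A)
  case 0
  have "{xs. length xs = 0 \<and> (\<forall>i<0. xs ! i \<in> A i)} = {[]}" by auto
  then show ?case by simp
next
  case (Suc k)
  let ?L = "{xs. length xs = k \<and> (\<forall>i<k. xs ! i \<in> A (Suc i))}"
  have eq: "{xs. length xs = Suc k \<and> (\<forall>i<Suc k. xs ! i \<in> A i)} = (\<lambda>(x, xs). x # xs) ` (A 0 \<times> ?L)"
  proof (intro set_eqI iffI)
    fix xs assume "xs \<in> {xs. length xs = Suc k \<and> (\<forall>i<Suc k. xs ! i \<in> A i)}"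
    then have h: "length xs = Suc k" "\<forall>i<Suc k. xs ! i \<in> A i" by auto
    then obtain y ys where xs: "xs = y # ys" by (cases xs) auto
    have "y \<in> A 0" using h xs by auto
    moreover have "ys \<in> ?L" using h xs by auto
    ultimately show "xs \<in> (\<lambda>(x, xs). x # xs) ` (A 0 \<times> ?L)" using xs by auto
  next
    fix xs assume "xs \<in> (\<lambda>(x, xs). x # xs) ` (A 0 \<times> ?L)"
    then obtain y ys where xs: "xs = y # ys" "y \<in> A 0" "ys \<in> ?L" by auto
    show "xs \<in> {xs. length xs = Suc k \<and> (\<forall>i<Suc k. xs ! i \<in> A i)}"
      using xs by (auto simp: nth_Cons less_Suc_eq_0_disj)
  qed
  have inj: "inj_on (\<lambda>(x, xs). x # xs) (A 0 \<times> ?L)" by (auto simp: inj_on_def)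
  have "card ?L = (\<Prod>i<k. card (A (Suc i)))" using Suc.IH[of "\<lambda>i. A (Suc i)"] Suc.prems by simp
  then show ?case unfolding eq card_image[OF inj] card_cartesian_product
    by (simp del: prod.lessThan_Suc add: prod.lessThan_Suc_shift)
qed

lemma fibre_count:
  fixes E :: "('v::ab_group_add list \<times> 'w) set"
  assumes fC: "finite C" and fK: "finite K" and fY: "finite Y"
    and Esub: "E \<subseteq> {(xs, ys). length xs = k \<and> set xs \<subseteq> C \<and> ys \<in> Y}"
    and i0: "i0 < k"
    and diff: "\<And>xs xs' ys. (xs, ys) \<in> E \<Longrightarrow> (xs', ys) \<in> E \<Longrightarrow> xs[i0 := a] = xs'[i0 := a] \<Longrightarrow> xs ! i0 - xs' ! i0 \<in> K"
  shows "card E \<le> card C ^ (k - 1) * card K * card Y"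
proof -
  define xst where "xst zs ys = (SOME x. (zs[i0 := x], ys) \<in> E)" for zs ys
  define G where "G = (\<lambda>(xs, ys). (xs[i0 := a + (xs ! i0 - xst (xs[i0 := a]) ys)], ys))"
  define A where "A i = (if i = i0 then (\<lambda>v. a + v) ` K else C)" for i
  let ?T = "{xs. length xs = k \<and> (\<forall>i<k. xs ! i \<in> A i)} \<times> Y"
  have fA: "finite (A i)" for i using fC fK by (simp add: A_def)
  have key: "(xs, ys) \<in> E \<Longrightarrow> ((xs[i0 := a])[i0 := xst (xs[i0 := a]) ys], ys) \<in> E" for xs ys
  proof -
    assume e: "(xs, ys) \<in> E"
    then have len: "length xs = k" using Esub by auto
    have "((xs[i0 := a])[i0 := xs ! i0], ys) \<in> E" using e by simp
    then show ?thesis unfolding xst_def by (rule someI)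
  qed
  have inK: "(xs, ys) \<in> E \<Longrightarrow> xs ! i0 - xst (xs[i0 := a]) ys \<in> K" for xs ys
  proof -
    assume e: "(xs, ys) \<in> E"
    then have len: "length xs = k" using Esub by auto
    have "xs ! i0 - ((xs[i0 := a])[i0 := xst (xs[i0 := a]) ys]) ! i0 \<in> K"
      by (rule diff[OF e key[OF e]]) simp
    then show ?thesis using len i0 by simp
  qed
  have "inj_on G E"
  proof (rule inj_onI)
    fix u w assume u: "u \<in> E" and w: "w \<in> E" and g: "G u = G w"
    obtain xs1 ys1 where u': "u = (xs1, ys1)" by (cases u)
    obtain xs2 ys2 where w': "w = (xs2, ys2)" by (cases w)
    have l1: "length xs1 = k" and l2: "length xs2 = k" using u w u' w' Esub by auto
    let ?t1 = "a + (xs1 ! i0 - xst (xs1[i0 := a]) ys1)"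
    let ?t2 = "a + (xs2 ! i0 - xst (xs2[i0 := a]) ys2)"
    have ys: "ys1 = ys2" and xx: "xs1[i0 := ?t1] = xs2[i0 := ?t2]" using g u' w' by (auto simp: G_def)
    have "xs1[i0 := ?t1] ! i0 = xs2[i0 := ?t2] ! i0" using xx by simp
    then have tt: "?t1 = ?t2" using l1 l2 i0 by simp
    have "xs1[i0 := a] = (xs1[i0 := ?t1])[i0 := a]" by simp
    also have "\<dots> = (xs2[i0 := ?t2])[i0 := a]" using xx by simp
    also have "\<dots> = xs2[i0 := a]" by simp
    finally have za: "xs1[i0 := a] = xs2[i0 := a]" .
    then have "xs1 ! i0 = xs2 ! i0" using tt ys by simp
    then have "xs1 = xs2" using za l1 l2
      by (metis list_update_id list_update_overwrite)
    then show "u = w" using u' w' ys by simp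
  qed
  moreover have "G ` E \<subseteq> ?T"
  proof
    fix g assume "g \<in> G ` E"
    then obtain xs ys where e: "(xs, ys) \<in> E" and g: "g = G (xs, ys)" by auto
    have h: "length xs = k" "set xs \<subseteq> C" "ys \<in> Y" using e Esub by auto
    have "xs[i0 := a + (xs ! i0 - xst (xs[i0 := a]) ys)] ! i \<in> A i" if "i < k" for i
    proof (cases "i = i0")
      case True then show ?thesis using inK[OF e] h i0 by (simp add: A_def)
    next
      case False then show ?thesis using h that by (auto simp: A_def)
    qed
    then show "g \<in> ?T" using g h by (simp add: G_def)
  qed
  moreover have "finite ?T"
  proof (rule finite_cartesian_product[OF _ fY])
    have "{xs. length xs = k \<and> (\<forall>i<k. xs ! i \<in> A i)} \<subseteq> {xs. set xs \<subseteq> (\<Union>i<k. A i) \<and> length xs = k}"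
      by (force simp: in_set_conv_nth)
    moreover have "finite {xs. set xs \<subseteq> (\<Union>i<k. A i) \<and> length xs = k}"
      using fA by (intro finite_lists_length_eq) auto
    ultimately show "finite {xs. length xs = k \<and> (\<forall>i<k. xs ! i \<in> A i)}" by (rule finite_subset)
  qed
  ultimately have "card E \<le> card ?T" by (rule card_inj_on_le)
  also have "card ?T = (\<Prod>i<k. card (A i)) * card Y" by (simp add: card_cartesian_product lists_prod[OF fA])
  also have "(\<Prod>i<k. card (A i)) = card K * card C ^ (k - 1)"
  proof -
    have "(\<Prod>i<k. card (A i)) = card (A i0) * (\<Prod>i\<in>{..<k} - {i0}. card (A i))"
      using i0 by (simp add: prod.remove)
    also have "(\<Prod>i\<in>{..<k} - {i0}. card (A i)) = (\<Prod>i\<in>{..<k} - {i0}. card C)"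
      by (intro prod.cong) (auto simp: A_def)
    also have "card (A i0) = card K" by (simp add: A_def card_image inj_on_def)
    finally show ?thesis using i0 by simp
  qed
  finally show ?thesis by (simp add: mult.commute)
qed



lemma bil_right: "bilinear_map \<beta> \<Longrightarrow> lf (\<lambda>y. \<beta> x y $ j)"
  unfolding lf_def bilinear_map_def by (simp add: vec.linear_add vec.linear_scale)

lemma bil_left: "bilinear_map \<beta> \<Longrightarrow> lf (\<lambda>x. \<beta> x y $ j)"
  unfolding lf_def bilinear_map_def
  by (simp add: vec.linear_add[where f="\<lambda>x. \<beta> x y"] vec.linear_scale[where f="\<lambda>x. \<beta> x y"])

lemma lcf_right: "bilinear_map \<beta> \<Longrightarrow> lf (\<lambda>y. lin_comb_form l \<beta> x y)"
  unfolding lin_comb_form_def by (rule lf_sum) (rule bil_right)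

lemma lcf_left: "bilinear_map \<beta> \<Longrightarrow> lf (\<lambda>x. lin_comb_form l \<beta> x y)"
  unfolding lin_comb_form_def by (rule lf_sum) (rule bil_left)

lemma subspace_kernels:
  assumes T: "vec.subspace T" and lfs: "\<forall>i\<in>I. lf (f i)"
  shows "vec.subspace {y\<in>T. \<forall>i\<in>I. f i y = 0}"
proof -
  have eq: "{y\<in>T. \<forall>i\<in>I. f i y = 0} = T \<inter> (\<Inter>i\<in>I. {y. f i y = 0})" by auto
  have "vec.subspace (\<Inter>i\<in>I. {y. f i y = 0})"
    using lfs by (intro vec.subspace_Inter) (auto intro: lf_kernel_subspace)
  then show ?thesis unfolding eq using T by (rule vec.subspace_inter[rotated])
qed

lemma K_bound:
  fixes V S :: "('a::{field,finite} ^ 'n) set" and \<beta> :: "'a ^ 'n \<Rightarrow> 'a ^ 'n \<Rightarrow> 'a ^ 'r"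
  assumes V: "vec.subspace V" and S: "vec.subspace S" and SV: "S \<subseteq> V"
    and d: "vec.dim V - vec.dim S = d" and bil: "bilinear_map \<beta>"
    and rk: "real (bf_rank_on V (lin_comb_form l \<beta>)) \<ge> s"
  shows "real (card {v\<in>V. \<forall>y\<in>S. lin_comb_form l \<beta> v y = 0})
     \<le> real CARD('a) powr (real (vec.dim V) - s + real d)"
proof -
  let ?f = "lin_comb_form l \<beta>"
  define K where "K = {v\<in>V. \<forall>y\<in>S. ?f v y = 0}"
  define R where "R = {v\<in>V. \<forall>y\<in>V. ?f v y = 0}"
  obtain BS where BS: "BS \<subseteq> S" "vec.independent BS" "S \<subseteq> vec.span BS" "card BS = vec.dim S"
    using vec.basis_exists by blast
  obtain BV where BV: "BS \<subseteq> BV" "BV \<subseteq> V" "vec.independent BV" "V \<subseteq> vec.span BV"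
    using vec.maximal_independent_subset_extend[of BS V] BS SV by blast
  have cBV: "card BV = vec.dim V" using vec.basis_card_eq_dim[OF BV(2) BV(4) BV(3)] .
  have fBV: "finite BV" using BV(3) vec.finiteI_independent by blast
  define E where "E = BV - BS"
  have fE: "finite E" using fBV by (simp add: E_def)
  have cE: "card E = d" unfolding E_def using BV(1) fBV BS(4) cBV d
    by (simp add: card_Diff_subset finite_subset)
  have lfl: "\<forall>y\<in>S. lf (\<lambda>v. ?f v y)" using lcf_left[OF bil] by blast
  have Ksub: "vec.subspace K" unfolding K_def using subspace_kernels[OF V lfl] .
  have Req: "R = {v\<in>K. \<forall>e\<in>E. ?f v e = 0}"
  proof (intro set_eqI iffI)
    fix v assume "v \<in> R"
    then show "v \<in> {v\<in>K. \<forall>e\<in>E. ?f v e = 0}" using SV BV(2) by (auto simp: R_def K_def E_def)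
  next
    fix v assume v: "v \<in> {v\<in>K. \<forall>e\<in>E. ?f v e = 0}"
    have ks: "vec.subspace {y. ?f v y = 0}" by (rule lf_kernel_subspace[OF lcf_right[OF bil]])
    have "BV \<subseteq> {y. ?f v y = 0}"
    proof
      fix b assume b: "b \<in> BV"
      show "b \<in> {y. ?f v y = 0}"
      proof (cases "b \<in> BS")
        case True then show ?thesis using v BS(1) by (auto simp: K_def)
      next
        case False then show ?thesis using v b by (auto simp: E_def)
      qed
    qed
    then have "vec.span BV \<subseteq> {y. ?f v y = 0}" using ks by (rule vec.span_minimal)
    then show "v \<in> R" using v BV(4) by (auto simp: R_def K_def)
  qed
  have lfE: "\<forall>e\<in>E. lf (\<lambda>v. ?f v e)" using lcf_left[OF bil] by blast
  have dK: "vec.dim K \<le> vec.dim R + d"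
    using dim_drop[OF fE Ksub lfE] unfolding Req cE .
  have "R \<subseteq> V" by (auto simp: R_def)
  then have "vec.dim R \<le> vec.dim V" by (rule vec.dim_subset)
  then have dR: "real (vec.dim R) \<le> real (vec.dim V) - s"
    using rk unfolding bf_rank_on_def R_def by (simp add: of_nat_diff)
  have p1: "real CARD('a) \<ge> 1" by simp
  have "real (card K) = real CARD('a) ^ vec.dim K" using card_subspace[OF Ksub] by simp
  also have "\<dots> = real CARD('a) powr real (vec.dim K)" using p1 by (simp add: powr_realpow)
  also have "\<dots> \<le> real CARD('a) powr (real (vec.dim V) - s + real d)"
    using dK dR p1 by (intro powr_mono) auto
  finally show ?thesis unfolding K_def .
qed



lemma sum_eq_except:
  fixes f g :: "nat \<Rightarrow> 'b::ab_group_add"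
  assumes "i0 < k" "\<And>i. i < k \<Longrightarrow> i \<noteq> i0 \<Longrightarrow> f i = g i" "(\<Sum>i<k. f i) = (\<Sum>i<k. g i)"
  shows "f i0 = g i0"
proof -
  have "(\<Sum>i<k. f i) = f i0 + (\<Sum>i\<in>{..<k} - {i0}. f i)" using assms(1) by (simp add: sum.remove)
  moreover have "(\<Sum>i<k. g i) = g i0 + (\<Sum>i\<in>{..<k} - {i0}. g i)" using assms(1) by (simp add: sum.remove)
  moreover have "(\<Sum>i\<in>{..<k} - {i0}. f i) = (\<Sum>i\<in>{..<k} - {i0}. g i)"
    using assms(2) by (intro sum.cong) auto
  ultimately show ?thesis using assms(3) by simp
qed

lemma card_coset:
  "card (coset a V) = card (V :: ('b::ab_group_add) set)"
  unfolding coset_def by (rule card_image) (simp add: inj_on_def)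

lemma Ev_bound:
  fixes V S :: "('a::{field,finite} ^ 'n) set" and \<beta> :: "'a ^ 'n \<Rightarrow> 'a ^ 'n \<Rightarrow> 'a ^ 'r"
  assumes V: "vec.subspace V" and S: "vec.subspace S" and SV: "S \<subseteq> V"
    and d: "vec.dim V - vec.dim S = d" and bil: "bilinear_map \<beta>"
    and rk: "bm_rank_ge V \<beta> s"
    and i0: "i0 < k" and l0: "ls ! i0 \<noteq> 0"
  shows "real (card {(xs, ys). (length xs = k \<and> length ys = k \<and> set xs \<subseteq> coset a V \<and> set ys \<subseteq> coset a V)
            \<and> (\<forall>y\<in>S. (\<Sum>i<k. lin_comb_form (ls ! i) \<beta> (xs ! i) y) = (\<Sum>i<k. lin_comb_form (ms ! i) \<beta> (ys ! i) y))})
     \<le> real (card V) ^ (k - 1) * real CARD('a) powr (real (vec.dim V) - s + real d) * real (card V) ^ k"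
proof -
  let ?C = "coset a V"
  let ?Y = "{ys. set ys \<subseteq> ?C \<and> length ys = k}"
  let ?E = "{(xs, ys). (length xs = k \<and> length ys = k \<and> set xs \<subseteq> ?C \<and> set ys \<subseteq> ?C)
            \<and> (\<forall>y\<in>S. (\<Sum>i<k. lin_comb_form (ls ! i) \<beta> (xs ! i) y) = (\<Sum>i<k. lin_comb_form (ms ! i) \<beta> (ys ! i) y))}"
  define K where "K = {v\<in>V. \<forall>y\<in>S. lin_comb_form (ls ! i0) \<beta> v y = 0}"
  have Esub: "?E \<subseteq> {(xs, ys). length xs = k \<and> set xs \<subseteq> ?C \<and> ys \<in> ?Y}" by auto
  have diff: "xs ! i0 - xs' ! i0 \<in> K" if e1: "(xs, ys) \<in> ?E" and e2: "(xs', ys) \<in> ?E"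
    and eq: "xs[i0 := a] = xs'[i0 := a]" for xs xs' ys
  proof -
    have l: "length xs = k" "length xs' = k" "set xs \<subseteq> ?C" "set xs' \<subseteq> ?C" using e1 e2 by simp_all
    have s1: "\<forall>y\<in>S. (\<Sum>i<k. lin_comb_form (ls ! i) \<beta> (xs ! i) y) = (\<Sum>i<k. lin_comb_form (ms ! i) \<beta> (ys ! i) y)"
      using e1 by simp
    have s2: "\<forall>y\<in>S. (\<Sum>i<k. lin_comb_form (ls ! i) \<beta> (xs' ! i) y) = (\<Sum>i<k. lin_comb_form (ms ! i) \<beta> (ys ! i) y)"
      using e2 by simp
    have same: "xs ! i = xs' ! i" if "i < k" "i \<noteq> i0" for i
    proof -
      have "xs[i0 := a] ! i = xs'[i0 := a] ! i" using eq by simp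
      then show ?thesis using that by simp
    qed
    have "xs ! i0 \<in> ?C" using l(1,3) i0 nth_mem[of i0 xs] by blast
    moreover have "xs' ! i0 \<in> ?C" using l(2,4) i0 nth_mem[of i0 xs'] by blast
    ultimately obtain v v' where vv: "v \<in> V" "v' \<in> V" "xs ! i0 = a + v" "xs' ! i0 = a + v'"
      unfolding coset_def by auto
    have inV: "xs ! i0 - xs' ! i0 \<in> V" using vv V by (simp add: vec.subspace_diff)
    have "lin_comb_form (ls ! i0) \<beta> (xs ! i0 - xs' ! i0) y = 0" if y: "y \<in> S" for y
    proof -
      have "(\<Sum>i<k. lin_comb_form (ls ! i) \<beta> (xs ! i) y) = (\<Sum>i<k. lin_comb_form (ms ! i) \<beta> (ys ! i) y)"
        using s1 y by (rule bspec)
      also have "\<dots> = (\<Sum>i<k. lin_comb_form (ls ! i) \<beta> (xs' ! i) y)" using s2 y by simp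
      finally have ss: "(\<Sum>i<k. lin_comb_form (ls ! i) \<beta> (xs ! i) y) = (\<Sum>i<k. lin_comb_form (ls ! i) \<beta> (xs' ! i) y)" .
      have "lin_comb_form (ls ! i0) \<beta> (xs ! i0) y = lin_comb_form (ls ! i0) \<beta> (xs' ! i0) y"
        using sum_eq_except[where f="\<lambda>i. lin_comb_form (ls ! i) \<beta> (xs ! i) y" and g="\<lambda>i. lin_comb_form (ls ! i) \<beta> (xs' ! i) y" and k=k, OF i0 _ ss] same by simp
      then show ?thesis using lf_diff[OF lcf_left[OF bil, of "ls ! i0" y], of "xs ! i0" "xs' ! i0"] by simp
    qed
    then show ?thesis using inV by (simp add: K_def)
  qed
  have fC: "finite ?C" by simp
  have fY: "finite ?Y" using finite_lists_length_eq[OF fC] by simp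
  have fK: "finite K" by simp
  have "card ?E \<le> card ?C ^ (k - 1) * card K * card ?Y"
    by (rule fibre_count[where E="?E" and K=K and C="?C" and Y="?Y", OF fC fK fY Esub i0 diff])
  also have "card ?Y = card V ^ k" using card_lists_length_eq[OF fC, of k] card_coset[of a V] by simp
  also have "card ?C = card V" by (rule card_coset)
  finally have "real (card ?E) \<le> real (card V ^ (k - 1) * card K * card V ^ k)"
    by (simp only: of_nat_le_iff)
  then have c1: "real (card ?E) \<le> real (card V) ^ (k - 1) * real (card K) * real (card V) ^ k"
    by (simp only: of_nat_mult of_nat_power)
  have "real (bf_rank_on V (lin_comb_form (ls ! i0) \<beta>)) \<ge> s" using rk l0 by (simp add: bm_rank_ge_def)
  then have "real (card K) \<le> real CARD('a) powr (real (vec.dim V) - s + real d)"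
    unfolding K_def by (rule K_bound[OF V S SV d bil])
  then have "real (card V) ^ (k - 1) * real (card K) * real (card V) ^ k
     \<le> real (card V) ^ (k - 1) * real CARD('a) powr (real (vec.dim V) - s + real d) * real (card V) ^ k"
    by (intro mult_right_mono mult_left_mono) auto
  with c1 show ?thesis by linarith
qed



lemma U_eq:
  fixes S V :: "('a::field ^ 'n) set" and \<beta> :: "'a ^ 'n \<Rightarrow> 'a ^ 'n \<Rightarrow> 'a ^ 'r"
  assumes B: "B = {(x, y). x \<in> coset a V \<and> y \<in> V \<and> \<beta> x y = 0}" and SV: "S \<subseteq> V"
    and zs: "length zs = k" "set zs \<subseteq> coset a V"
  shows "S \<inter> (\<Inter>x\<in>set zs. sect B x) = {y\<in>S. \<forall>q\<in>{..<k} \<times> (UNIV :: 'r set). \<beta> (zs ! fst q) y $ snd q = 0}"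
proof (intro set_eqI iffI)
  fix y assume y: "y \<in> S \<inter> (\<Inter>x\<in>set zs. sect B x)"
  then have yS: "y \<in> S" by simp
  have "\<beta> (zs ! i) y = 0" if "i < k" for i
  proof -
    have "zs ! i \<in> set zs" using that zs by simp
    then have "y \<in> sect B (zs ! i)" using y by blast
    then show ?thesis by (simp add: sect_def B)
  qed
  then show "y \<in> {y\<in>S. \<forall>q\<in>{..<k} \<times> (UNIV :: 'r set). \<beta> (zs ! fst q) y $ snd q = 0}"
    using yS by auto
next
  fix y assume y: "y \<in> {y\<in>S. \<forall>q\<in>{..<k} \<times> (UNIV :: 'r set). \<beta> (zs ! fst q) y $ snd q = 0}"
  then have yS: "y \<in> S" by simp
  have "y \<in> sect B x" if x: "x \<in> set zs" for x
  proof -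
    obtain i where i: "i < k" "x = zs ! i" using x zs by (auto simp: in_set_conv_nth)
    have "\<beta> x y $ j = 0" for j using y i by auto
    then have "\<beta> x y = 0" by (simp add: vec_eq_iff)
    moreover have "x \<in> coset a V" using x zs by blast
    ultimately show ?thesis using yS SV by (auto simp: sect_def B)
  qed
  then show "y \<in> S \<inter> (\<Inter>x\<in>set zs. sect B x)" using yS by blast
qed

lemma sum_ident:
  fixes \<beta> :: "'a::field ^ 'n \<Rightarrow> 'a ^ 'n \<Rightarrow> 'a ^ 'r"
  shows "(\<Sum>q\<in>{..<k} \<times> (UNIV :: 'r set). c q * \<beta> (zs ! fst q) y $ snd q)
    = (\<Sum>i<k. lin_comb_form (map (\<lambda>i. \<chi> j. c (i, j)) [0..<k] ! i) \<beta> (zs ! i) y)"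
proof -
  have "(\<Sum>i<k. lin_comb_form (map (\<lambda>i. \<chi> j. c (i, j)) [0..<k] ! i) \<beta> (zs ! i) y)
      = (\<Sum>i<k. \<Sum>j\<in>UNIV. c (i, j) * \<beta> (zs ! i) y $ j)"
    by (intro sum.cong) (auto simp: lin_comb_form_def)
  also have "\<dots> = (\<Sum>q\<in>{..<k} \<times> (UNIV :: 'r set). c q * \<beta> (zs ! fst q) y $ snd q)"
    by (simp add: sum.cartesian_product case_prod_beta)
  finally show ?thesis by simp
qed

lemma bad_witness:
  fixes S V :: "('a::{field,finite} ^ 'n) set" and \<beta> :: "'a ^ 'n \<Rightarrow> 'a ^ 'n \<Rightarrow> 'a ^ 'r"
  assumes B: "B = {(x, y). x \<in> coset a V \<and> y \<in> V \<and> \<beta> x y = 0}"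
    and S: "vec.subspace S" and SV: "S \<subseteq> V" and bil: "bilinear_map \<beta>"
    and xs: "length xs = k" "set xs \<subseteq> coset a V"
    and ys: "length ys = k" "set ys \<subseteq> coset a V"
    and bad: "setsum (S \<inter> (\<Inter>x\<in>set xs. sect B x)) (S \<inter> (\<Inter>y\<in>set ys. sect B y)) \<noteq> S"
  shows "\<exists>ls ms. length ls = k \<and> length ms = k \<and> (\<exists>i<k. ls ! i \<noteq> 0) \<and>
     (\<forall>y\<in>S. (\<Sum>i<k. lin_comb_form (ls ! i) \<beta> (xs ! i) y) = (\<Sum>i<k. lin_comb_form (ms ! i) \<beta> (ys ! i) y))"
proof -
  let ?I = "{..<k} \<times> (UNIV :: 'r set)"
  define fx where "fx q y = \<beta> (xs ! fst q) y $ snd q" for q y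
  define fy where "fy q y = \<beta> (ys ! fst q) y $ snd q" for q y
  define Ux where "Ux = {y\<in>S. \<forall>q\<in>?I. fx q y = 0}"
  define Uy where "Uy = {y\<in>S. \<forall>q\<in>?I. fy q y = 0}"
  have fI: "finite ?I" by simp
  have lfx: "\<forall>q\<in>?I. lf (fx q)" unfolding fx_def using bil_right[OF bil] by blast
  have lfy: "\<forall>q\<in>?I. lf (fy q)" unfolding fy_def using bil_right[OF bil] by blast
  have sUx: "vec.subspace Ux" unfolding Ux_def by (rule subspace_kernels[OF S lfx])
  have sUy: "vec.subspace Uy" unfolding Uy_def by (rule subspace_kernels[OF S lfy])
  have eqx: "S \<inter> (\<Inter>x\<in>set xs. sect B x) = Ux" unfolding Ux_def fx_def using U_eq[OF B SV xs] .
  have eqy: "S \<inter> (\<Inter>x\<in>set ys. sect B x) = Uy" unfolding Uy_def fy_def using U_eq[OF B SV ys] .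
  define M where "M = setsum Ux Uy"
  have sM: "vec.subspace M" unfolding M_def setsum_def using sUx sUy by (rule vec.subspace_sums)
  have MS: "M \<subseteq> S" unfolding M_def setsum_def Ux_def Uy_def using S by (auto intro: vec.subspace_add)
  have "M \<noteq> S" using bad unfolding eqx eqy M_def .
  then obtain z where z: "z \<in> S" "z \<notin> M" using MS by blast
  obtain \<phi> where phi: "lf \<phi>" "\<phi> z \<noteq> 0" "\<forall>y\<in>M. \<phi> y = 0" using phi_exists[OF sM z(2)] by blast
  have 0: "0 \<in> Ux" "0 \<in> Uy" using sUx sUy by (simp_all add: vec.subspace_0)
  have vx: "\<forall>y\<in>S. (\<forall>q\<in>?I. fx q y = 0) \<longrightarrow> \<phi> y = 0"
  proof (intro ballI impI)
    fix y assume "y \<in> S" "\<forall>q\<in>?I. fx q y = 0"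
    then have "y \<in> Ux" by (simp add: Ux_def)
    then have "y + 0 \<in> M" unfolding M_def setsum_def using 0 by blast
    then show "\<phi> y = 0" using phi(3) by simp
  qed
  have vy: "\<forall>y\<in>S. (\<forall>q\<in>?I. fy q y = 0) \<longrightarrow> \<phi> y = 0"
  proof (intro ballI impI)
    fix y assume "y \<in> S" "\<forall>q\<in>?I. fy q y = 0"
    then have "y \<in> Uy" by (simp add: Uy_def)
    then have "0 + y \<in> M" unfolding M_def setsum_def using 0 by blast
    then show "\<phi> y = 0" using phi(3) by simp
  qed
  obtain c where c: "\<forall>y\<in>S. \<phi> y = (\<Sum>q\<in>?I. c q * fx q y)"
    using dual_span[OF fI S lfx phi(1) vx] by blast
  obtain c' where c': "\<forall>y\<in>S. \<phi> y = (\<Sum>q\<in>?I. c' q * fy q y)"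
    using dual_span[OF fI S lfy phi(1) vy] by blast
  define ls where "ls = map (\<lambda>i. \<chi> j. c (i, j)) [0..<k]"
  define ms where "ms = map (\<lambda>i. \<chi> j. c' (i, j)) [0..<k]"
  have ex: "\<phi> y = (\<Sum>i<k. lin_comb_form (ls ! i) \<beta> (xs ! i) y)" if "y \<in> S" for y
    using c that sum_ident[where c=c and k=k and zs=xs and y=y and \<beta>=\<beta>] unfolding ls_def fx_def by simp
  have ey: "\<phi> y = (\<Sum>i<k. lin_comb_form (ms ! i) \<beta> (ys ! i) y)" if "y \<in> S" for y
    using c' that sum_ident[where c=c' and k=k and zs=ys and y=y and \<beta>=\<beta>] unfolding ms_def fy_def by simp
  have nz: "\<exists>i<k. ls ! i \<noteq> 0"
  proof (rule ccontr)
    assume "\<not> (\<exists>i<k. ls ! i \<noteq> 0)"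
    then have "c q = 0" if qI: "q \<in> ?I" for q
    proof -
      obtain i j where q0: "q = (i, j)" by (cases q)
      have q: "q = (i, j)" "i < k" using qI q0 by auto
      have "ls ! i = 0" using q \<open>\<not> (\<exists>i<k. ls ! i \<noteq> 0)\<close> by blast
      then have "ls ! i $ j = 0" by simp
      then show ?thesis using q by (simp add: ls_def)
    qed
    then have "\<phi> z = 0" using c z(1) by simp
    then show False using phi(2) by simp
  qed
  have eq: "\<forall>y\<in>S. (\<Sum>i<k. lin_comb_form (ls ! i) \<beta> (xs ! i) y) = (\<Sum>i<k. lin_comb_form (ms ! i) \<beta> (ys ! i) y)"
  proof
    fix y assume "y \<in> S"
    then show "(\<Sum>i<k. lin_comb_form (ls ! i) \<beta> (xs ! i) y) = (\<Sum>i<k. lin_comb_form (ms ! i) \<beta> (ys ! i) y)"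
      using ex[of y] ey[of y] by simp
  qed
  have "length ls = k" "length ms = k" by (simp_all add: ls_def ms_def)
  then show ?thesis using nz eq by blast
qed



theorem lemma2p8:
  fixes p :: nat and r d k :: nat and s :: real
    and V S :: "('a::{field,finite} ^ 'n) set"
    and \<beta> :: "'a ^ 'n \<Rightarrow> 'a ^ 'n \<Rightarrow> 'a ^ 'r"
    and a :: "'a ^ 'n"
  assumes "prime p" and "CARD('a) = p" and "CARD('r) = r"
    and "vec.subspace V"
    and "bilinear_map \<beta>"
    and "bm_rank_ge V \<beta> s"
    and "vec.subspace S" and "S \<subseteq> V" and "vec.dim V - vec.dim S = d"
    and "k > 0"
  shows "let B = {(x, y). x \<in> coset a V \<and> y \<in> V \<and> \<beta> x y = 0} in
    real (card {(xs, ys). length xs = k \<and> length ys = k \<and>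
                  set xs \<subseteq> coset a V \<and> set ys \<subseteq> coset a V \<and>
                  setsum (S \<inter> (\<Inter>x\<in>set xs. sect B x)) (S \<inter> (\<Inter>y\<in>set ys. sect B y)) \<noteq> S})
      \<le> 81 * real p powr (2 * real d + 4 * real k * real r - s / 4) * real (card V) ^ (2 * k)"
proof -
  note pr = assms(1) and cA = assms(2) and cR = assms(3) and V = assms(4) and bil = assms(5)
    and rk = assms(6) and S = assms(7) and SV = assms(8) and d = assms(9) and k0 = assms(10)
  define B where "B = {(x, y). x \<in> coset a V \<and> y \<in> V \<and> \<beta> x y = 0}"
  define C where "C = coset a V"
  define Bad where "Bad = {(xs, ys). length xs = k \<and> length ys = k \<and>
                  set xs \<subseteq> coset a V \<and> set ys \<subseteq> coset a V \<and>
                  setsum (S \<inter> (\<Inter>x\<in>set xs. sect B x)) (S \<inter> (\<Inter>y\<in>set ys. sect B y)) \<noteq> S}"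
  define L where "L = {xs. set xs \<subseteq> C \<and> length xs = k}"
  define Dom where "Dom = L \<times> L"
  define LW where "LW = {ls :: ('a ^ 'r) list. set ls \<subseteq> UNIV \<and> length ls = k}"
  define W where "W = {(ls, ms). ls \<in> LW \<and> ms \<in> LW \<and> (\<exists>i<k. ls ! i \<noteq> 0)}"
  define Ev where "Ev w = {(xs, ys). (length xs = k \<and> length ys = k \<and> set xs \<subseteq> coset a V \<and> set ys \<subseteq> coset a V)
            \<and> (\<forall>y\<in>S. (\<Sum>i<k. lin_comb_form (fst w ! i) \<beta> (xs ! i) y) = (\<Sum>i<k. lin_comb_form (snd w ! i) \<beta> (ys ! i) y))}" for w
  define N where "N = real (card V)"
  define P where "P = real p"
  define n where "n = vec.dim V"
  define Mb where "Mb = N ^ (k - 1) * P powr (real n - s + real d) * N ^ k"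
  have P2: "P \<ge> 2" using pr by (simp add: P_def prime_ge_2_nat)
  have fC: "finite C" by simp
  have cC: "card C = card V" unfolding C_def by (rule card_coset)
  have fL: "finite L" unfolding L_def using finite_lists_length_eq[OF fC] .
  have cL: "card L = card V ^ k" unfolding L_def using card_lists_length_eq[OF fC] cC by simp
  have fDom: "finite Dom" unfolding Dom_def using fL by simp
  have cDom: "card Dom = card V ^ (2 * k)" unfolding Dom_def using cL
    by (simp add: card_cartesian_product power_add[symmetric] mult_2)
  have BadDom: "Bad \<subseteq> Dom" unfolding Bad_def Dom_def L_def C_def by auto
  have fLW: "finite LW" unfolding LW_def by (rule finite_lists_length_eq) simp
  have cLW: "card LW = p ^ (r * k)" unfolding LW_def
    using card_lists_length_eq[of "UNIV :: ('a ^ 'r) set" k] cA cR by (simp add: power_mult)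
  have WLW: "W \<subseteq> LW \<times> LW" unfolding W_def by auto
  have fW: "finite W" using WLW fLW by (meson finite_SigmaI finite_subset)
  have cW: "card W \<le> p ^ (r * k) * p ^ (r * k)"
  proof -
    have "card W \<le> card (LW \<times> LW)" using WLW fLW by (intro card_mono) auto
    then show ?thesis using cLW by (simp add: card_cartesian_product)
  qed
  have BadU: "Bad \<subseteq> (\<Union>w\<in>W. Ev w)"
  proof
    fix u assume u: "u \<in> Bad"
    obtain xs ys where u': "u = (xs, ys)" by (cases u)
    have h: "length xs = k" "set xs \<subseteq> coset a V" "length ys = k" "set ys \<subseteq> coset a V"
      "setsum (S \<inter> (\<Inter>x\<in>set xs. sect B x)) (S \<inter> (\<Inter>y\<in>set ys. sect B y)) \<noteq> S"
      using u unfolding u' Bad_def by simp_all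
    obtain ls ms where lm: "length ls = k" "length ms = k" "\<exists>i<k. ls ! i \<noteq> 0"
      "\<forall>y\<in>S. (\<Sum>i<k. lin_comb_form (ls ! i) \<beta> (xs ! i) y) = (\<Sum>i<k. lin_comb_form (ms ! i) \<beta> (ys ! i) y)"
      using bad_witness[OF B_def S SV bil h(1,2) h(3,4) h(5)] by blast
    have "(ls, ms) \<in> W" using lm by (simp add: W_def LW_def)
    moreover have "u \<in> Ev (ls, ms)" using lm h unfolding u' Ev_def by simp
    ultimately show "u \<in> (\<Union>w\<in>W. Ev w)" by blast
  qed
  have EvB: "real (card (Ev w)) \<le> Mb" if w: "w \<in> W" for w
  proof -
    obtain ls ms where w': "w = (ls, ms)" by (cases w)
    obtain i0 where i0: "i0 < k" "ls ! i0 \<noteq> 0" using w unfolding w' W_def by auto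
    have "real (card (Ev w)) \<le> real (card V) ^ (k - 1) * real CARD('a) powr (real (vec.dim V) - s + real d) * real (card V) ^ k"
      unfolding w' Ev_def fst_conv snd_conv by (rule Ev_bound[OF V S SV d bil rk i0])
    then show ?thesis unfolding Mb_def N_def P_def n_def using cA by simp
  qed
  have fEv: "finite (Ev w)" for w
  proof -
    have "Ev w \<subseteq> Dom" unfolding Ev_def Dom_def L_def C_def by auto
    then show ?thesis using fDom by (rule finite_subset)
  qed
  have "card Bad \<le> card (\<Union>w\<in>W. Ev w)" using BadU fW fEv by (intro card_mono) auto
  also have "\<dots> \<le> (\<Sum>w\<in>W. card (Ev w))" by (rule card_UN_le[OF fW])
  finally have "real (card Bad) \<le> (\<Sum>w\<in>W. real (card (Ev w)))"
    by (metis of_nat_le_iff of_nat_sum)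
  also have "\<dots> \<le> (\<Sum>w\<in>W. Mb)" using EvB by (rule sum_mono)
  also have "\<dots> = real (card W) * Mb" by simp
  also have "\<dots> \<le> (P ^ (r * k) * P ^ (r * k)) * Mb"
  proof (rule mult_right_mono)
    show "real (card W) \<le> P ^ (r * k) * P ^ (r * k)" unfolding P_def using cW
      by (metis of_nat_le_iff of_nat_mult of_nat_power)
    show "0 \<le> Mb" unfolding Mb_def N_def by simp
  qed
  finally have main: "real (card Bad) \<le> (P ^ (r * k) * P ^ (r * k)) * Mb" .
  have cV: "N = P powr real n"
    unfolding N_def P_def n_def using card_subspace[OF V] cA P2 by (simp add: powr_realpow P_def)
  have "(P ^ (r * k) * P ^ (r * k)) * Mb = P powr (2 * real k * real r + real d - s) * N ^ (2 * k)"
  proof -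
    have e1: "P ^ (r * k) * P ^ (r * k) = P powr (2 * real k * real r)"
      using P2 by (simp add: powr_realpow[symmetric] powr_add[symmetric] algebra_simps)
    have e2: "P powr (real n - s + real d) = N * P powr (real d - s)"
    proof -
      have "real n - s + real d = real n + (real d - s)" by simp
      then show ?thesis unfolding cV by (simp only: powr_add)
    qed
    have e3: "N ^ (k - 1) * N * N ^ k = N ^ (2 * k)"
      using k0 by (simp add: power_add[symmetric] mult_2) (metis Suc_pred power_Suc2 power_add mult.commute)
    have "(P ^ (r * k) * P ^ (r * k)) * Mb = P powr (2 * real k * real r) * P powr (real d - s) * (N ^ (k - 1) * N * N ^ k)"
      unfolding Mb_def e1 e2 by (simp add: algebra_simps)
    also have "\<dots> = P powr (2 * real k * real r + real d - s) * N ^ (2 * k)"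
      unfolding e3 by (simp add: powr_add[symmetric] algebra_simps)
    finally show ?thesis .
  qed
  with main have main2: "real (card Bad) \<le> P powr (2 * real k * real r + real d - s) * N ^ (2 * k)" by simp
  have goal: "real (card Bad) \<le> 81 * P powr (2 * real d + 4 * real k * real r - s / 4) * N ^ (2 * k)"
  proof (cases "s \<ge> 0")
    case True
    have "P powr (2 * real k * real r + real d - s) \<le> P powr (2 * real d + 4 * real k * real r - s / 4)"
    proof (rule powr_mono)
      have "0 \<le> real k * real r" by simp
      then show "2 * real k * real r + real d - s \<le> 2 * real d + 4 * real k * real r - s / 4"
        using True by linarith
      show "1 \<le> P" using P2 by simp
    qed
    then have "P powr (2 * real k * real r + real d - s) \<le> 81 * P powr (2 * real d + 4 * real k * real r - s / 4)"
      using powr_ge_zero[of P "2 * real d + 4 * real k * real r - s / 4"] by linarith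
    then have "P powr (2 * real k * real r + real d - s) * N ^ (2 * k) \<le> 81 * P powr (2 * real d + 4 * real k * real r - s / 4) * N ^ (2 * k)"
      unfolding N_def by (rule mult_right_mono) simp
    with main2 show ?thesis by linarith
  next
    case False
    have "real (card Bad) \<le> real (card Dom)" using BadDom fDom by (simp add: card_mono)
    also have "\<dots> = N ^ (2 * k)" unfolding N_def cDom by simp
    also have "\<dots> \<le> 81 * P powr (2 * real d + 4 * real k * real r - s / 4) * N ^ (2 * k)"
    proof -
      have "1 \<le> P powr (2 * real d + 4 * real k * real r - s / 4)"
      proof (rule ge_one_powr_ge_zero)
        have "0 \<le> real k * real r" by simp
        then show "0 \<le> 2 * real d + 4 * real k * real r - s / 4" using False by linarith
        show "1 \<le> P" using P2 by simp
      qed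
      then have "1 \<le> 81 * P powr (2 * real d + 4 * real k * real r - s / 4)" by linarith
      then have "1 * N ^ (2 * k) \<le> 81 * P powr (2 * real d + 4 * real k * real r - s / 4) * N ^ (2 * k)"
        unfolding N_def by (rule mult_right_mono) simp
      then show ?thesis by simp
    qed
    finally show ?thesis .
  qed
  show ?thesis using goal unfolding Let_def Bad_def B_def N_def P_def .
qed


end
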